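(* Let $\Gamma=(\mathcal{A},\mathcal{R})$ be a finite argumentation framework with $|\mathcal{A}|=k$ and indexing $\phi$, and let $\Pi_\Gamma$ be a CNF formula over $\mathrm{VARS}(\Gamma)$ whose satisfying assignments are exactly those assignments for which setting $\mathcal{L}ab(\phi(i))=\mathtt{in}/\mathtt{out}/\mathtt{undec}$ according as $I_i/O_i/U_i$ is true yields a well-defined complete labelling of $\Gamma$ with at least one argument labelled $\mathtt{in}$. Let $SS$ be any procedure which, given a CNF formula, returns some satisfying assignment if one exists and the symbol $\varepsilon$ otherwise (the choice among satisfying assignments being arbitrary). For an assignment $\nu$ let $\mathrm{INARGS}(\nu)=\{\phi(i): I_i \text{ true in }\nu\}$. Consider the following procedure PrefSat: Set $E_p:=\emptyset$ and $cnf:=\Pi_\Gamma$. Outer loop: set $cnfdf:=cnf$ and $prefcand:=$ undefined. Inner loop: let $\nu:=SS(cnfdf)$; if $\nu\ne\varepsilon$, set $prefcand:=\nu$, $S:=\mathrm{INARGS}(\nu)$, and replace $cnfdf$ by $cnfdf\wedge\bigwedge_{a\in S}I_{\phi^{-1}(a)}\wedge\big(\bigvee_{a\in\mathcal{A}\setminus S}I_{\phi^{-1}(a)}\big)$ (an empty disjunction being false); repeat the inner loop as long as $\nu\neq\varepsilon$ and $\mathrm{INARGS}(\nu)\neq\mathcal{A}$. After the inner loop, if $prefcand$ is defined, set $E_p:=E_p\cup\{\mathrm{INARGS}(prefcand)\}$ and replace $cnf$ by $cnf\wedge\bigvee_{a\in\mathcal{A}\setminus\mathrm{INARGS}(prefcand)}I_{\phi^{-1}(a)}$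 (an empty disjunction being false); repeat the outer loop as long as $prefcand$ is defined. Finally, if $E_p=\emptyset$ set $E_p:=\{\emptyset\}$, and return $E_p$. Then, for every choice of outputs of $SS$, PrefSat terminates and returns exactly the set of preferred extensions of $\Gamma$.
   Context: An argumentation framework is a pair $(\mathcal{A},\mathcal{R})$ with $\mathcal{A}$ a finite set and $\mathcal{R}\subseteq\mathcal{A}\times\mathcal{A}$; $b$ attacks $a$ iff $(b,a)\in\mathcal{R}$, and $a^-=\{b:(b,a)\in\mathcal{R}\}$. A set $S\subseteq\mathcal{A}$ is conflict-free if no $a,b\in S$ with $b$ attacking $a$; $a$ is acceptable w.r.t. $S$ if every attacker of $a$ is attacked by some element of $S$; $S$ is admissible if conflict-free and every element of $S$ is acceptable w.r.t. $S$; $S$ is a preferred extension if it is a maximal (w.r.t. set inclusion) admissible set. A total function $\mathcal{L}ab:\mathcal{A}\to\{\mathtt{in},\mathtt{out},\mathtt{undec}\}$ is a complete labelling iff for every $a$: $\mathcal{L}ab(a)=\mathtt{in}\Leftrightarrow\forall b\in a^-\ \mathcal{L}ab(b)=\mathtt{out}$; $\mathcal{L}ab(a)=\mathtt{out}\Leftrightarrow\exists b\in a^-\ \mathcal{L}ab(b)=\mathtt{in}$; $\mathcal{L}ab(a)=\mathtt{undec}\Leftrightarrow(\forall b\in a^-\ \mathcal{L}ab(b)\ne\mathtt{in}\wedge\exists c\in a^-\ \mathcal{L}ab(c)=\mathtt{undec})$. An indexing is a bijection $\phi:\{1,\dots,k\}\to\mathcal{A}$, and $\mathrm{VARS}(\Gamma)=\bigcup_{i=1}^k\{I_i,O_i,U_i\}$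 are boolean variables. *)

theory Defs
  imports Main
begin

definition attackers :: "('a \<times> 'a) set \<Rightarrow> 'a \<Rightarrow> 'a set" where
  "attackers R a = {b. (b, a) \<in> R}"

definition conflict_free :: "('a \<times> 'a) set \<Rightarrow> 'a set \<Rightarrow> bool" where
  "conflict_free R S \<longleftrightarrow> (\<forall>a\<in>S. \<forall>b\<in>S. (b, a) \<notin> R)"

definition acceptable :: "('a \<times> 'a) set \<Rightarrow> 'a \<Rightarrow> 'a set \<Rightarrow> bool" where
  "acceptable R a S \<longleftrightarrow> (\<forall>b\<in>attackers R a. \<exists>c\<in>S. (c, b) \<in> R)"

definition admissible :: "'a set \<Rightarrow> ('a \<times> 'a) set \<Rightarrow> 'a set \<Rightarrow> bool" where
  "admissible A R S \<longleftrightarrow> S \<subseteq> A \<and> conflict_free R S \<and> (\<forall>a\<in>S. acceptable R a S)"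

definition preferred :: "'a set \<Rightarrow> ('a \<times> 'a) set \<Rightarrow> 'a set \<Rightarrow> bool" where
  "preferred A R S \<longleftrightarrow> admissible A R S \<and>
     (\<forall>T. admissible A R T \<and> S \<subseteq> T \<longrightarrow> T = S)"

datatype label = lab_in | lab_out | lab_undec

definition complete_labelling :: "'a set \<Rightarrow> ('a \<times> 'a) set \<Rightarrow> ('a \<Rightarrow> label) \<Rightarrow> bool" where
  "complete_labelling A R Lab \<longleftrightarrow> (\<forall>a\<in>A.
     (Lab a = lab_in \<longleftrightarrow> (\<forall>b\<in>attackers R a. Lab b = lab_out)) \<and>
     (Lab a = lab_out \<longleftrightarrow> (\<exists>b\<in>attackers R a. Lab b = lab_in)) \<and>
     (Lab a = lab_undec \<longleftrightarrow> ((\<forall>b\<in>attackers R a. Lab b \<noteq> lab_in) \<and>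
                               (\<exists>c\<in>attackers R a. Lab c = lab_undec))))"

datatype var = VI nat | VO nat | VU nat

datatype lit = Pos var | Neg var

type_synonym clause = "lit set"
type_synonym cnf = "clause set"
type_synonym assignment = "var \<Rightarrow> bool"

fun lit_true :: "assignment \<Rightarrow> lit \<Rightarrow> bool" where
  "lit_true \<nu> (Pos v) = \<nu> v"
| "lit_true \<nu> (Neg v) = (\<not> \<nu> v)"

fun lit_var :: "lit \<Rightarrow> var" where
  "lit_var (Pos v) = v"
| "lit_var (Neg v) = v"

definition sat :: "assignment \<Rightarrow> cnf \<Rightarrow> bool" where
  "sat \<nu> f \<longleftrightarrow> (\<forall>C\<in>f. \<exists>l\<in>C. lit_true \<nu> l)"

definition is_cnf_over :: "var set \<Rightarrow> cnf \<Rightarrow> bool" where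
  "is_cnf_over V f \<longleftrightarrow> finite f \<and> (\<forall>C\<in>f. finite C \<and> (\<forall>l\<in>C. lit_var l \<in> V))"

definition VARS :: "nat \<Rightarrow> var set" where
  "VARS k = (\<Union>i\<in>{1..k}. {VI i, VO i, VU i})"

text \<open>Admissible outputs of the SAT solver SS on formula f (None plays the role of epsilon).\<close>
definition SS_output :: "cnf \<Rightarrow> assignment option \<Rightarrow> bool" where
  "SS_output f r \<longleftrightarrow> (r = None \<longleftrightarrow> \<not> (\<exists>\<nu>. sat \<nu> f)) \<and> (\<forall>\<nu>. r = Some \<nu> \<longrightarrow> sat \<nu> f)"

definition idx :: "(nat \<Rightarrow> 'a) \<Rightarrow> nat \<Rightarrow> 'a \<Rightarrow> nat" where
  "idx \<phi> k a = inv_into {1..k} \<phi> a"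

definition lab_of :: "assignment \<Rightarrow> nat \<Rightarrow> label" where
  "lab_of \<nu> i = (if \<nu> (VI i) then lab_in else if \<nu> (VO i) then lab_out else lab_undec)"

definition encodes_complete_nonempty ::
  "'a set \<Rightarrow> ('a \<times> 'a) set \<Rightarrow> (nat \<Rightarrow> 'a) \<Rightarrow> nat \<Rightarrow> assignment \<Rightarrow> bool" where
  "encodes_complete_nonempty A R \<phi> k \<nu> \<longleftrightarrow>
     (\<forall>i\<in>{1..k}. (\<nu> (VI i) \<and> \<not> \<nu> (VO i) \<and> \<not> \<nu> (VU i)) \<or>
                 (\<not> \<nu> (VI i) \<and> \<nu> (VO i) \<and> \<not> \<nu> (VU i)) \<or>
                 (\<not> \<nu> (VI i) \<and> \<not> \<nu> (VO i) \<and> \<nu> (VU i))) \<and>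
     complete_labelling A R (\<lambda>a. lab_of \<nu> (idx \<phi> k a)) \<and>
     (\<exists>a\<in>A. lab_of \<nu> (idx \<phi> k a) = lab_in)"

definition INARGS :: "(nat \<Rightarrow> 'a) \<Rightarrow> nat \<Rightarrow> assignment \<Rightarrow> 'a set" where
  "INARGS \<phi> k \<nu> = {\<phi> i | i. i \<in> {1..k} \<and> \<nu> (VI i)}"

text \<open>Outer cnf Ep: start of an outer iteration.
  Inner cnf Ep cnfdf prefcand: start of an inner iteration (about to call SS).
  After cnf Ep prefcand: inner loop just ended.
  Done E: returned E.\<close>
datatype 'a pstate =
    Outer cnf "'a set set"
  | Inner cnf "'a set set" cnf "assignment option"
  | After cnf "'a set set" "assignment option"
  | Done "'a set set"

definition inner_add :: "'a set \<Rightarrow> (nat \<Rightarrow> 'a) \<Rightarrow> nat \<Rightarrow> 'a set \<Rightarrow> cnf" where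
  "inner_add A \<phi> k S = {{Pos (VI (idx \<phi> k a))} | a. a \<in> S} \<union> {{Pos (VI (idx \<phi> k a)) | a. a \<in> A - S}}"

definition outer_add :: "'a set \<Rightarrow> (nat \<Rightarrow> 'a) \<Rightarrow> nat \<Rightarrow> 'a set \<Rightarrow> cnf" where
  "outer_add A \<phi> k S = {{Pos (VI (idx \<phi> k a)) | a. a \<in> A - S}}"

inductive pref_step :: "'a set \<Rightarrow> (nat \<Rightarrow> 'a) \<Rightarrow> nat \<Rightarrow> 'a pstate \<Rightarrow> 'a pstate \<Rightarrow> bool"
  for A \<phi> k where
  outer: "pref_step A \<phi> k (Outer cnf Ep) (Inner cnf Ep cnf None)"
| call_cont: "SS_output cnfdf (Some \<nu>) \<Longrightarrow> INARGS \<phi> k \<nu> \<noteq> A \<Longrightarrow>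
     pref_step A \<phi> k (Inner cnf Ep cnfdf pc)
       (Inner cnf Ep (cnfdf \<union> inner_add A \<phi> k (INARGS \<phi> k \<nu>)) (Some \<nu>))"
| call_all: "SS_output cnfdf (Some \<nu>) \<Longrightarrow> INARGS \<phi> k \<nu> = A \<Longrightarrow>
     pref_step A \<phi> k (Inner cnf Ep cnfdf pc) (After cnf Ep (Some \<nu>))"
| call_eps: "SS_output cnfdf None \<Longrightarrow>
     pref_step A \<phi> k (Inner cnf Ep cnfdf pc) (After cnf Ep pc)"
| after_some: "pref_step A \<phi> k (After cnf Ep (Some p))
     (Outer (cnf \<union> outer_add A \<phi> k (INARGS \<phi> k p)) (Ep \<union> {INARGS \<phi> k p}))"
| after_none: "pref_step A \<phi> k (After cnf Ep None) (Done (if Ep = {} then {{}} else Ep))"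

end

theory Submission
  imports Defs
begin

lemma sat_Un[simp]: "sat \<nu> (F \<union> G) \<longleftrightarrow> sat \<nu> F \<and> sat \<nu> G"
  unfolding sat_def by blast

lemma SS_some: "SS_output f (Some \<nu>) \<Longrightarrow> sat \<nu> f"
  unfolding SS_output_def by auto

lemma SS_none: "SS_output f None \<Longrightarrow> \<not> sat \<nu> f"
  unfolding SS_output_def by auto

lemma SS_ex: "\<exists>r. SS_output f r"
proof (cases "\<exists>\<nu>. sat \<nu> f")
  case True
  then obtain \<nu> where "sat \<nu> f" by blast
  then have "SS_output f (Some \<nu>)" using True unfolding SS_output_def by auto
  then show ?thesis by blast
next
  case False
  then have "SS_output f None" unfolding SS_output_def by auto
  then show ?thesis by blast
qed

lemma acceptable_mono: "acceptable R a S \<Longrightarrow> S \<subseteq> T \<Longrightarrow> acceptable R a T"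
  unfolding acceptable_def by blast

lemma fundamental:
  assumes adm: "admissible A R P" and aA: "a \<in> A" and acc: "acceptable R a P"
  shows "admissible A R (insert a P)"
proof -
  have cf: "conflict_free R P" and PA: "P \<subseteq> A" and accP: "\<forall>x\<in>P. acceptable R x P"
    using adm unfolding admissible_def by auto
  have n1: "\<not> (b, a) \<in> R" if "b \<in> P" for b
  proof
    assume "(b, a) \<in> R"
    then obtain c where "c \<in> P" "(c, b) \<in> R" using acc unfolding acceptable_def attackers_def by blast
    then show False using cf \<open>b \<in> P\<close> unfolding conflict_free_def by blast
  qed
  have n2: "\<not> (a, b) \<in> R" if "b \<in> P" for b
  proof
    assume "(a, b) \<in> R"
    then obtain c where "c \<in> P" "(c, a) \<in> R" using accP \<open>b \<in> P\<close> unfolding acceptable_def attackers_def by blast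
    then show False using n1 by blast
  qed
  have n3: "\<not> (a, a) \<in> R"
  proof
    assume "(a, a) \<in> R"
    then obtain c where "c \<in> P" "(c, a) \<in> R" using acc unfolding acceptable_def attackers_def by blast
    then show False using n1 by blast
  qed
  have "conflict_free R (insert a P)"
    using cf n1 n2 n3 unfolding conflict_free_def by blast
  moreover have "\<forall>x\<in>insert a P. acceptable R x (insert a P)"
    using accP acc acceptable_mono[of R _ P "insert a P"] by blast
  ultimately show ?thesis using PA aA unfolding admissible_def by blast
qed

lemma preferred_complete:
  assumes "preferred A R P" "a \<in> A" "acceptable R a P"
  shows "a \<in> P"
  using assms fundamental[of A R P a] unfolding preferred_def by blast

lemma exists_preferred:
  assumes finA: "finite A" and adm: "admissible A R T"
  shows "\<exists>P. preferred A R P \<and> T \<subseteq> P"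
proof -
  let ?F = "{U. admissible A R U \<and> T \<subseteq> U}"
  have "?F \<subseteq> Pow A" unfolding admissible_def by blast
  then have "finite ?F" using finA by (meson finite_Pow_iff finite_subset)
  moreover have "T \<in> ?F" using adm by blast
  ultimately obtain m where m: "m \<in> ?F" "\<forall>b\<in>?F. m \<le> b \<longrightarrow> m = b"
    using finite_has_maximal2[of ?F T] by blast
  have "preferred A R m" unfolding preferred_def
  proof (intro conjI allI impI)
    show "admissible A R m" using m by blast
    fix V assume "admissible A R V \<and> m \<subseteq> V"
    then show "V = m" using m by blast
  qed
  then show ?thesis using m by blast
qed

lemma complete_labelling_cong:
  assumes "R \<subseteq> A \<times> A" "\<forall>a\<in>A. L a = L' a" "complete_labelling A R L"
  shows "complete_labelling A R L'"
proof -
  have att: "attackers R a \<subseteq> A" for a using assms(1) unfolding attackers_def by blast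
  show ?thesis unfolding complete_labelling_def
  proof
    fix a assume aA: "a \<in> A"
    have eq: "\<forall>b\<in>attackers R a. L b = L' b" using att assms(2) by blast
    have "(L a = lab_in \<longleftrightarrow> (\<forall>b\<in>attackers R a. L b = lab_out)) \<and>
     (L a = lab_out \<longleftrightarrow> (\<exists>b\<in>attackers R a. L b = lab_in)) \<and>
     (L a = lab_undec \<longleftrightarrow> ((\<forall>b\<in>attackers R a. L b \<noteq> lab_in) \<and>
                               (\<exists>c\<in>attackers R a. L c = lab_undec)))"
      using assms(3) aA unfolding complete_labelling_def by blast
    then show "(L' a = lab_in \<longleftrightarrow> (\<forall>b\<in>attackers R a. L' b = lab_out)) \<and>
     (L' a = lab_out \<longleftrightarrow> (\<exists>b\<in>attackers R a. L' b = lab_in)) \<and>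
     (L' a = lab_undec \<longleftrightarrow> ((\<forall>b\<in>attackers R a. L' b \<noteq> lab_in) \<and>
                               (\<exists>c\<in>attackers R a. L' c = lab_undec)))"
      using eq assms(2) aA by (smt (verit))
  qed
qed

lemma preferred_labelling:
  assumes RA: "R \<subseteq> A \<times> A" and pref: "preferred A R P"
  defines "Lab \<equiv> (\<lambda>a. if a \<in> P then lab_in else if (\<exists>b\<in>P. (b, a) \<in> R) then lab_out else lab_undec)"
  shows "complete_labelling A R Lab"
proof -
  have adm: "admissible A R P" using pref unfolding preferred_def by blast
  have cf: "conflict_free R P" and PA: "P \<subseteq> A" and accP: "\<forall>x\<in>P. acceptable R x P"
    using adm unfolding admissible_def by auto
  show ?thesis unfolding complete_labelling_def
  proof (intro ballI conjI)
    fix a assume aA: "a \<in> A"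
    have inD: "Lab b = lab_out" if h: "a \<in> P" "b \<in> attackers R a" for b
    proof -
      obtain c where "c \<in> P" "(c, b) \<in> R" using accP h unfolding acceptable_def by blast
      moreover have "b \<notin> P" using cf h unfolding conflict_free_def attackers_def by blast
      ultimately show ?thesis unfolding Lab_def by auto
    qed
    show "Lab a = lab_in \<longleftrightarrow> (\<forall>b\<in>attackers R a. Lab b = lab_out)"
    proof
      assume "Lab a = lab_in"
      then have "a \<in> P" unfolding Lab_def by (auto split: if_splits)
      then show "\<forall>b\<in>attackers R a. Lab b = lab_out" using inD by blast
    next
      assume H: "\<forall>b\<in>attackers R a. Lab b = lab_out"
      have "acceptable R a P" unfolding acceptable_def
      proof
        fix b assume "b \<in> attackers R a"
        then have "Lab b = lab_out" using H by blast
        then show "\<exists>c\<in>P. (c, b) \<in> R" unfolding Lab_def by (auto split: if_splits)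
      qed
      then have "a \<in> P" using preferred_complete[OF pref aA] by blast
      then show "Lab a = lab_in" unfolding Lab_def by simp
    qed
    show "Lab a = lab_out \<longleftrightarrow> (\<exists>b\<in>attackers R a. Lab b = lab_in)"
    proof
      assume "Lab a = lab_out"
      then obtain b where "b \<in> P" "(b, a) \<in> R" unfolding Lab_def by (auto split: if_splits)
      then show "\<exists>b\<in>attackers R a. Lab b = lab_in" unfolding Lab_def attackers_def by auto
    next
      assume "\<exists>b\<in>attackers R a. Lab b = lab_in"
      then obtain b where "b \<in> P" "(b, a) \<in> R" unfolding Lab_def attackers_def by (auto split: if_splits)
      moreover then have "a \<notin> P" using cf unfolding conflict_free_def by blast
      ultimately show "Lab a = lab_out" unfolding Lab_def by auto
    qed
    show "Lab a = lab_undec \<longleftrightarrow> ((\<forall>b\<in>attackers R a. Lab b \<noteq> lab_in) \<and>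
                               (\<exists>c\<in>attackers R a. Lab c = lab_undec))"
    proof
      assume U: "Lab a = lab_undec"
      then have aP: "a \<notin> P" and nb: "\<not> (\<exists>b\<in>P. (b, a) \<in> R)" unfolding Lab_def by (auto split: if_splits)
      have "\<not> acceptable R a P" using aP preferred_complete[OF pref aA] by blast
      then obtain b where b: "b \<in> attackers R a" "\<not> (\<exists>c\<in>P. (c, b) \<in> R)" unfolding acceptable_def by blast
      then have "b \<notin> P" using nb unfolding attackers_def by blast
      then have "Lab b = lab_undec" using b unfolding Lab_def by auto
      moreover have "\<forall>b\<in>attackers R a. Lab b \<noteq> lab_in" using nb unfolding Lab_def attackers_def by auto
      ultimately show "(\<forall>b\<in>attackers R a. Lab b \<noteq> lab_in) \<and> (\<exists>c\<in>attackers R a. Lab c = lab_undec)"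
        using b by blast
    next
      assume H: "(\<forall>b\<in>attackers R a. Lab b \<noteq> lab_in) \<and> (\<exists>c\<in>attackers R a. Lab c = lab_undec)"
      then obtain c where c: "c \<in> attackers R a" "Lab c = lab_undec" by blast
      have "a \<notin> P"
      proof
        assume "a \<in> P"
        then have "Lab c = lab_out" using inD c(1) by blast
        then show False using c(2) by simp
      qed
      moreover have "\<not> (\<exists>b\<in>P. (b, a) \<in> R)" using H unfolding Lab_def attackers_def by auto
      ultimately show "Lab a = lab_undec" unfolding Lab_def by auto
    qed
  qed
qed

lemma sat_single: "sat \<nu> {D} \<longleftrightarrow> (\<exists>l\<in>D. lit_true \<nu> l)"
  by (simp add: sat_def)

lemma bex_img: "(\<exists>l\<in>{f a | a. a \<in> T}. P l) \<longleftrightarrow> (\<exists>a\<in>T. P (f a))"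
  by blast

lemma sat_units: "sat \<nu> {{f a} | a. a \<in> S} \<longleftrightarrow> (\<forall>a\<in>S. lit_true \<nu> (f a))"
proof
  assume H: "sat \<nu> {{f a} | a. a \<in> S}"
  show "\<forall>a\<in>S. lit_true \<nu> (f a)"
  proof
    fix a assume "a \<in> S"
    then have "{f a} \<in> {{f a} | a. a \<in> S}" by blast
    then show "lit_true \<nu> (f a)" using H unfolding sat_def by blast
  qed
next
  assume H: "\<forall>a\<in>S. lit_true \<nu> (f a)"
  show "sat \<nu> {{f a} | a. a \<in> S}" unfolding sat_def
  proof
    fix C assume "C \<in> {{f a} | a. a \<in> S}"
    then obtain a where "C = {f a}" "a \<in> S" by blast
    then show "\<exists>l\<in>C. lit_true \<nu> l" using H by blast
  qed
qed

locale PS =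
  fixes A :: "'a set" and R :: "('a \<times> 'a) set" and k :: nat
    and \<phi> :: "nat \<Rightarrow> 'a" and \<Pi> :: cnf
  assumes finA: "finite A" and RA: "R \<subseteq> A \<times> A" and cardA: "card A = k"
    and bij: "bij_betw \<phi> {1..k} A"
    and PiSat: "\<forall>\<nu>. sat \<nu> \<Pi> \<longleftrightarrow> encodes_complete_nonempty A R \<phi> k \<nu>"
begin

abbreviation IA where "IA \<nu> \<equiv> INARGS \<phi> k \<nu>"

lemma img: "\<phi> ` {1..k} = A" using bij by (simp add: bij_betw_def)
lemma injp: "inj_on \<phi> {1..k}" using bij by (simp add: bij_betw_def)
lemma idx_in: "a \<in> A \<Longrightarrow> idx \<phi> k a \<in> {1..k}"
  unfolding idx_def using inv_into_into[of a \<phi> "{1..k}"] img by simp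
lemma phi_idx: "a \<in> A \<Longrightarrow> \<phi> (idx \<phi> k a) = a"
  unfolding idx_def using f_inv_into_f[of a \<phi> "{1..k}"] img by simp
lemma idx_phi: "i \<in> {1..k} \<Longrightarrow> idx \<phi> k (\<phi> i) = i"
  unfolding idx_def using inv_into_f_f[OF injp] by simp

lemma IA_sub: "IA \<nu> \<subseteq> A" unfolding INARGS_def using img by auto

lemma IA_mem: "a \<in> A \<Longrightarrow> a \<in> IA \<nu> \<longleftrightarrow> \<nu> (VI (idx \<phi> k a))"
proof
  assume "a \<in> IA \<nu>"
  then obtain i where "i \<in> {1..k}" "\<nu> (VI i)" "a = \<phi> i" unfolding INARGS_def by blast
  then show "\<nu> (VI (idx \<phi> k a))" using idx_phi by simp
next
  assume aA: "a \<in> A" and v: "\<nu> (VI (idx \<phi> k a))"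
  have "a = \<phi> (idx \<phi> k a) \<and> idx \<phi> k a \<in> {1..k} \<and> \<nu> (VI (idx \<phi> k a))"
    using idx_in[OF aA] phi_idx[OF aA] v by simp
  then show "a \<in> IA \<nu>" unfolding INARGS_def by blast
qed

lemma lab_in_iff: "a \<in> A \<Longrightarrow> lab_of \<nu> (idx \<phi> k a) = lab_in \<longleftrightarrow> a \<in> IA \<nu>"
  using IA_mem unfolding lab_of_def by auto

lemma sat_outer: "sat \<nu> (outer_add A \<phi> k S) \<longleftrightarrow> \<not> IA \<nu> \<subseteq> S"
proof -
  have "sat \<nu> (outer_add A \<phi> k S) \<longleftrightarrow> (\<exists>a\<in>A - S. \<nu> (VI (idx \<phi> k a)))"
    unfolding outer_add_def
    using sat_single[of \<nu> "{Pos (VI (idx \<phi> k a)) | a. a \<in> A - S}"] bex_img[where T="A - S" and f="\<lambda>a. Pos (VI (idx \<phi> k a))" and P="lit_true \<nu>"] by simp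
  also have "\<dots> \<longleftrightarrow> (\<exists>a\<in>A - S. a \<in> IA \<nu>)" using IA_mem by auto
  also have "\<dots> \<longleftrightarrow> \<not> IA \<nu> \<subseteq> S" using IA_sub[of \<nu>] by auto
  finally show ?thesis .
qed

lemma sat_inner: "S \<subseteq> A \<Longrightarrow> sat \<nu> (inner_add A \<phi> k S) \<longleftrightarrow> S \<subseteq> IA \<nu> \<and> \<not> IA \<nu> \<subseteq> S"
proof -
  assume SA: "S \<subseteq> A"
  have "sat \<nu> (inner_add A \<phi> k S) \<longleftrightarrow> (\<forall>a\<in>S. \<nu> (VI (idx \<phi> k a))) \<and> (\<exists>a\<in>A - S. \<nu> (VI (idx \<phi> k a)))"
  proof -
    have 1: "sat \<nu> {{Pos (VI (idx \<phi> k a))} | a. a \<in> S} \<longleftrightarrow> (\<forall>a\<in>S. \<nu> (VI (idx \<phi> k a)))"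
      using sat_units[of \<nu> "\<lambda>a. Pos (VI (idx \<phi> k a))" S] by simp
    have 2: "sat \<nu> {{Pos (VI (idx \<phi> k a)) | a. a \<in> A - S}} \<longleftrightarrow> (\<exists>a\<in>A - S. \<nu> (VI (idx \<phi> k a)))"
      using sat_single[of \<nu> "{Pos (VI (idx \<phi> k a)) | a. a \<in> A - S}"] bex_img[where T="A - S" and f="\<lambda>a. Pos (VI (idx \<phi> k a))" and P="lit_true \<nu>"] by simp
    show ?thesis unfolding inner_add_def sat_Un 1 2 ..
  qed
  also have "\<dots> \<longleftrightarrow> (\<forall>a\<in>S. a \<in> IA \<nu>) \<and> (\<exists>a\<in>A - S. a \<in> IA \<nu>)" using IA_mem SA by auto
  also have "\<dots> \<longleftrightarrow> S \<subseteq> IA \<nu> \<and> \<not> IA \<nu> \<subseteq> S" using IA_sub[of \<nu>] by auto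
  finally show ?thesis .
qed

definition CC where "CC = {IA \<nu> | \<nu>. sat \<nu> \<Pi>}"
definition maxC where "maxC = {X \<in> CC. \<forall>Y\<in>CC. X \<subseteq> Y \<longrightarrow> Y = X}"

lemma C_adm:
  assumes "X \<in> CC" shows "admissible A R X \<and> X \<noteq> {}"
proof -
  obtain \<nu> where X: "X = IA \<nu>" and s: "sat \<nu> \<Pi>" using assms unfolding CC_def by blast
  have enc: "encodes_complete_nonempty A R \<phi> k \<nu>" using s PiSat by blast
  define L where "L = (\<lambda>a. lab_of \<nu> (idx \<phi> k a))"
  have cl: "complete_labelling A R L" and ne: "\<exists>a\<in>A. L a = lab_in"
    using enc unfolding encodes_complete_nonempty_def L_def by auto
  have Lin: "a \<in> A \<Longrightarrow> L a = lab_in \<longleftrightarrow> a \<in> X" for a using lab_in_iff X L_def by simp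
  have XA: "X \<subseteq> A" using X IA_sub by simp
  have att: "b \<in> attackers R a \<Longrightarrow> b \<in> A" for a b using RA unfolding attackers_def by blast
  have clA: "a \<in> A \<Longrightarrow> (L a = lab_in \<longleftrightarrow> (\<forall>b\<in>attackers R a. L b = lab_out)) \<and>
     (L a = lab_out \<longleftrightarrow> (\<exists>b\<in>attackers R a. L b = lab_in))" for a
    using cl unfolding complete_labelling_def by blast
  have "conflict_free R X" unfolding conflict_free_def
  proof (intro ballI)
    fix a b assume "a \<in> X" "b \<in> X"
    show "(b, a) \<notin> R"
    proof
      assume ba: "(b, a) \<in> R"
      have "L a = lab_in" using \<open>a \<in> X\<close> XA Lin by blast
      then have "L b = lab_out" using clA[of a] \<open>a \<in> X\<close> XA ba unfolding attackers_def by blast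
      moreover have "L b = lab_in" using \<open>b \<in> X\<close> XA Lin by blast
      ultimately show False by simp
    qed
  qed
  moreover have "\<forall>a\<in>X. acceptable R a X" unfolding acceptable_def
  proof (intro ballI)
    fix a b assume aX: "a \<in> X" and b: "b \<in> attackers R a"
    have "L a = lab_in" using aX XA Lin by blast
    then have "L b = lab_out" using clA[of a] aX XA b by blast
    then obtain c where c: "c \<in> attackers R b" "L c = lab_in" using clA[of b] att[OF b] by blast
    then have "c \<in> X" using Lin att by blast
    then show "\<exists>c\<in>X. (c, b) \<in> R" using c unfolding attackers_def by blast
  qed
  moreover have "X \<noteq> {}" using ne Lin by blast
  ultimately show ?thesis using XA unfolding admissible_def by blast
qed

lemma pref_in_C:
  assumes pref: "preferred A R P" and ne: "P \<noteq> {}"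
  shows "P \<in> CC"
proof -
  have PA: "P \<subseteq> A" using pref unfolding preferred_def admissible_def by blast
  define Lab where "Lab = (\<lambda>a. if a \<in> P then lab_in else if (\<exists>b\<in>P. (b, a) \<in> R) then lab_out else lab_undec)"
  have cl: "complete_labelling A R Lab" unfolding Lab_def by (rule preferred_labelling[OF RA pref])
  define \<nu> where "\<nu> = (\<lambda>v. case v of VI i \<Rightarrow> \<phi> i \<in> P | VO i \<Rightarrow> Lab (\<phi> i) = lab_out
                                | VU i \<Rightarrow> Lab (\<phi> i) = lab_undec)"
  have lo: "lab_of \<nu> i = Lab (\<phi> i)" for i
    by (auto simp: lab_of_def Lab_def \<nu>_def)
  have "encodes_complete_nonempty A R \<phi> k \<nu>"
    unfolding encodes_complete_nonempty_def
  proof (intro conjI)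
    show "\<forall>i\<in>{1..k}. (\<nu> (VI i) \<and> \<not> \<nu> (VO i) \<and> \<not> \<nu> (VU i)) \<or>
                 (\<not> \<nu> (VI i) \<and> \<nu> (VO i) \<and> \<not> \<nu> (VU i)) \<or>
                 (\<not> \<nu> (VI i) \<and> \<not> \<nu> (VO i) \<and> \<nu> (VU i))"
      by (auto simp: Lab_def \<nu>_def)
    show "complete_labelling A R (\<lambda>a. lab_of \<nu> (idx \<phi> k a))"
      by (rule complete_labelling_cong[OF RA _ cl]) (simp add: lo phi_idx)
    obtain a where "a \<in> P" using ne by blast
    then show "\<exists>a\<in>A. lab_of \<nu> (idx \<phi> k a) = lab_in"
      using PA by (auto simp: lo phi_idx Lab_def)
  qed
  then have "sat \<nu> \<Pi>" using PiSat by blast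
  moreover have "IA \<nu> = P"
  proof
    show "IA \<nu> \<subseteq> P" unfolding INARGS_def \<nu>_def by auto
    show "P \<subseteq> IA \<nu>"
    proof
      fix a assume "a \<in> P"
      then have "a \<in> A" using PA by blast
      then show "a \<in> IA \<nu>" using IA_mem \<open>a \<in> P\<close> phi_idx by (simp add: \<nu>_def)
    qed
  qed
  ultimately show ?thesis unfolding CC_def by blast
qed

lemma pref_char: "{S. preferred A R S} = (if CC = {} then {{}} else maxC)"
proof (cases "CC = {}")
  case True
  have "preferred A R S \<longleftrightarrow> S = {}" for S
  proof
    assume "preferred A R S"
    then show "S = {}" using pref_in_C True by blast
  next
    assume S: "S = {}"
    show "preferred A R S" unfolding preferred_def
    proof (intro conjI allI impI)
      show "admissible A R S" using S unfolding admissible_def conflict_free_def by simp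
      fix T assume T: "admissible A R T \<and> S \<subseteq> T"
      obtain P where P: "preferred A R P" "T \<subseteq> P" using exists_preferred[OF finA] T by blast
      then have "P = {}" using pref_in_C True by blast
      then show "T = S" using P S by blast
    qed
  qed
  then show ?thesis using True by auto
next
  case False
  have "preferred A R S \<longleftrightarrow> S \<in> maxC" for S
  proof
    assume pS: "preferred A R S"
    obtain X where X: "X \<in> CC" using False by blast
    have "S \<noteq> {}"
    proof
      assume "S = {}"
      then have "X = S" using pS C_adm[OF X] unfolding preferred_def by blast
      then show False using C_adm[OF X] \<open>S = {}\<close> by blast
    qed
    then have "S \<in> CC" using pref_in_C pS by blast
    moreover have "\<forall>Y\<in>CC. S \<subseteq> Y \<longrightarrow> Y = S" using pS C_adm unfolding preferred_def by blast
    ultimately show "S \<in> maxC" unfolding maxC_def by blast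
  next
    assume S: "S \<in> maxC"
    then have SC: "S \<in> CC" and mx: "\<forall>Y\<in>CC. S \<subseteq> Y \<longrightarrow> Y = S" unfolding maxC_def by auto
    show "preferred A R S" unfolding preferred_def
    proof (intro conjI allI impI)
      show "admissible A R S" using C_adm[OF SC] by blast
      fix T assume T: "admissible A R T \<and> S \<subseteq> T"
      obtain P where P: "preferred A R P" "T \<subseteq> P" using exists_preferred[OF finA] T by blast
      have "P \<noteq> {}" using P T C_adm[OF SC] by blast
      then have "P \<in> CC" using pref_in_C P by blast
      then have "P = S" using mx P T by blast
      then show "T = S" using P T by blast
    qed
  qed
  then show ?thesis using False by auto
qed

end


context PS
begin

definition ok :: "cnf \<Rightarrow> 'a set set \<Rightarrow> bool" where
  "ok cnf Ep \<longleftrightarrow> Ep \<subseteq> maxC \<and> (\<forall>\<nu>. sat \<nu> cnf \<longleftrightarrow> sat \<nu> \<Pi> \<and> (\<forall>E\<in>Ep. \<not> IA \<nu> \<subseteq> E))"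

primrec invar :: "'a pstate \<Rightarrow> bool" where
  "invar (Outer cnf Ep) = ok cnf Ep"
| "invar (Inner cnf Ep cnfdf pc) = (ok cnf Ep \<and> (case pc of None \<Rightarrow> (\<forall>\<nu>. sat \<nu> cnfdf \<longleftrightarrow> sat \<nu> cnf)
     | Some p \<Rightarrow> sat p cnf \<and> (\<forall>\<nu>. sat \<nu> cnfdf \<longleftrightarrow> sat \<nu> cnf \<and> IA p \<subset> IA \<nu>)))"
| "invar (After cnf Ep pc) = (ok cnf Ep \<and> (case pc of None \<Rightarrow> (\<forall>\<nu>. \<not> sat \<nu> cnf)
     | Some p \<Rightarrow> sat p cnf \<and> (\<forall>\<nu>. sat \<nu> cnf \<longrightarrow> \<not> IA p \<subset> IA \<nu>)))"
| "invar (Done E) = (E = {S. preferred A R S})"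

definition NN where "NN = 2 ^ card A + 1"
definition KK where "KK = card A + 4"

primrec meas :: "'a pstate \<Rightarrow> nat" where
  "meas (Outer cnf Ep) = (NN - card Ep) * KK + card A + 3"
| "meas (Inner cnf Ep cnfdf pc) = (case pc of None \<Rightarrow> (NN - card Ep) * KK + card A + 2
     | Some p \<Rightarrow> (NN - card Ep) * KK + 1 + (card A - card (IA p)))"
| "meas (After cnf Ep pc) = (NN - card Ep) * KK"
| "meas (Done E) = 0"

lemma maxC_sub: "maxC \<subseteq> Pow A"
  unfolding maxC_def CC_def using IA_sub by blast

lemma ok_card: "ok cnf Ep \<Longrightarrow> finite Ep \<and> card Ep < NN"
proof -
  assume "ok cnf Ep"
  then have "Ep \<subseteq> Pow A" using maxC_sub unfolding ok_def by blast
  moreover have "finite (Pow A)" using finA by simp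
  ultimately have "finite Ep" by (rule finite_subset)
  have "card Ep \<le> card (Pow A)" using \<open>Ep \<subseteq> Pow A\<close> \<open>finite (Pow A)\<close> by (rule card_mono[rotated])
  then show ?thesis using finA card_Pow[of A] \<open>finite Ep\<close> unfolding NN_def by simp
qed

lemma ok_init: "ok \<Pi> {}" unfolding ok_def by simp

lemma step_inv:
  assumes st: "pref_step A \<phi> k s t" and I: "invar s"
  shows "invar t \<and> meas t < meas s"
  using st
proof cases
  case (outer cnf Ep)
  then show ?thesis using I by simp
next
  case (call_cont cnfdf \<nu> cnf Ep pc)
  have sn: "sat \<nu> cnfdf" using call_cont SS_some by blast
  have okc: "ok cnf Ep" using I call_cont by simp
  have cnfdf_cnf: "sat \<mu> cnfdf \<Longrightarrow> sat \<mu> cnf" for \<mu>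
    using I call_cont by (cases pc) auto
  have snc: "sat \<nu> cnf" using cnfdf_cnf sn by blast
  have new: "sat \<mu> (cnfdf \<union> inner_add A \<phi> k (IA \<nu>)) \<longleftrightarrow> sat \<mu> cnf \<and> IA \<nu> \<subset> IA \<mu>" for \<mu>
  proof -
    have "sat \<mu> (cnfdf \<union> inner_add A \<phi> k (IA \<nu>)) \<longleftrightarrow> sat \<mu> cnfdf \<and> IA \<nu> \<subset> IA \<mu>"
      using sat_inner[OF IA_sub[of \<nu>], of \<mu>] by auto
    also have "\<dots> \<longleftrightarrow> sat \<mu> cnf \<and> IA \<nu> \<subset> IA \<mu>"
    proof (cases pc)
      case None
      then show ?thesis using I call_cont by simp
    next
      case (Some p)
      then have "\<forall>\<mu>. sat \<mu> cnfdf \<longleftrightarrow> sat \<mu> cnf \<and> IA p \<subset> IA \<mu>" using I call_cont by simp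
      moreover have "IA p \<subset> IA \<nu>" using calculation sn by blast
      ultimately show ?thesis by blast
    qed
    finally show ?thesis .
  qed
  have invt: "invar t" using call_cont okc snc new by simp
  have fin: "finite (IA \<nu>)" using IA_sub finA finite_subset by blast
  have cle: "card (IA \<nu>) \<le> card A" using IA_sub finA card_mono by blast
  have "meas t < meas s"
  proof (cases pc)
    case None
    then show ?thesis using call_cont by simp
  next
    case (Some p)
    then have "\<forall>\<mu>. sat \<mu> cnfdf \<longleftrightarrow> sat \<mu> cnf \<and> IA p \<subset> IA \<mu>" using I call_cont by simp
    then have "IA p \<subset> IA \<nu>" using sn by blast
    then have "card (IA p) < card (IA \<nu>)" using fin psubset_card_mono by blast
    then show ?thesis using call_cont Some cle by simp
  qed
  then show ?thesis using invt by blast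
next
  case (call_all cnfdf \<nu> cnf Ep pc)
  have sn: "sat \<nu> cnfdf" using call_all SS_some by blast
  have okc: "ok cnf Ep" using I call_all by simp
  have cnfdf_cnf: "sat \<mu> cnfdf \<Longrightarrow> sat \<mu> cnf" for \<mu>
    using I call_all by (cases pc) auto
  have "\<not> IA \<nu> \<subset> IA \<mu>" for \<mu> using call_all IA_sub[of \<mu>] by blast
  then have "invar t" using call_all okc cnfdf_cnf sn by simp
  moreover have "meas t < meas s" using call_all by (cases pc) auto
  ultimately show ?thesis by blast
next
  case (call_eps cnfdf cnf Ep pc)
  have un: "\<not> sat \<mu> cnfdf" for \<mu> using call_eps SS_none by blast
  have "invar t"
  proof (cases pc)
    case None
    then show ?thesis using I call_eps un by simp
  next
    case (Some p)
    then show ?thesis using I call_eps un by simp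
  qed
  moreover have "meas t < meas s" using call_eps by (cases pc) auto
  ultimately show ?thesis by blast
next
  case (after_some cnf Ep p)
  have okc: "ok cnf Ep" and sp: "sat p cnf" and mx: "\<forall>\<nu>. sat \<nu> cnf \<longrightarrow> \<not> IA p \<subset> IA \<nu>"
    using I after_some by auto
  have Epm: "Ep \<subseteq> maxC" and cs: "\<forall>\<nu>. sat \<nu> cnf \<longleftrightarrow> sat \<nu> \<Pi> \<and> (\<forall>E\<in>Ep. \<not> IA \<nu> \<subseteq> E)"
    using okc unfolding ok_def by auto
  have pPi: "sat p \<Pi>" and pE: "\<forall>E\<in>Ep. \<not> IA p \<subseteq> E" using cs sp by auto
  have "IA p \<in> maxC" unfolding maxC_def
  proof (intro CollectI conjI ballI impI)
    show "IA p \<in> CC" using pPi unfolding CC_def by blast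
    fix Y assume Y: "Y \<in> CC" "IA p \<subseteq> Y"
    then obtain \<mu> where \<mu>: "Y = IA \<mu>" "sat \<mu> \<Pi>" unfolding CC_def by blast
    have "\<forall>E\<in>Ep. \<not> IA \<mu> \<subseteq> E" using pE Y \<mu> by blast
    then have "sat \<mu> cnf" using cs \<mu> by blast
    then show "Y = IA p" using mx Y \<mu> by blast
  qed
  then have ok2: "ok (cnf \<union> outer_add A \<phi> k (IA p)) (Ep \<union> {IA p})"
    unfolding ok_def using Epm cs sat_outer by auto
  have notin: "IA p \<notin> Ep" using pE by blast
  have fc: "finite Ep" "card Ep < NN" using ok_card[OF okc] by auto
  have fc2: "card (Ep \<union> {IA p}) < NN" using ok_card[OF ok2] by auto
  have cc: "card (Ep \<union> {IA p}) = card Ep + 1" using fc notin by simp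
  have "meas t < meas s"
  proof -
    obtain u where u: "NN - card (Ep \<union> {IA p}) = u" by blast
    then have "NN - card Ep = Suc u" using cc fc2 by simp
    then show ?thesis using after_some u by (simp add: KK_def)
  qed
  then show ?thesis using ok2 after_some by simp
next
  case (after_none cnf Ep)
  have okc: "ok cnf Ep" and un: "\<forall>\<nu>. \<not> sat \<nu> cnf" using I after_none by auto
  have Epm: "Ep \<subseteq> maxC" and cs: "\<forall>\<nu>. sat \<nu> cnf \<longleftrightarrow> sat \<nu> \<Pi> \<and> (\<forall>E\<in>Ep. \<not> IA \<nu> \<subseteq> E)"
    using okc unfolding ok_def by auto
  have cov: "\<exists>E\<in>Ep. X \<subseteq> E" if hX: "X \<in> CC" for X
  proof -
    obtain \<nu> where "X = IA \<nu>" "sat \<nu> \<Pi>" using hX unfolding CC_def by blast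
    then have "\<not> (\<forall>E\<in>Ep. \<not> IA \<nu> \<subseteq> E)" using cs un by blast
    then show ?thesis using \<open>X = IA \<nu>\<close> by blast
  qed
  have res: "(if Ep = {} then {{}} else Ep) = {S. preferred A R S}"
  proof (cases "Ep = {}")
    case True
    then have "CC = {}" using cov by blast
    then show ?thesis using True pref_char by simp
  next
    case False
    have CCne: "CC \<noteq> {}" using False Epm unfolding maxC_def by blast
    have "Ep = maxC"
    proof
      show "Ep \<subseteq> maxC" using Epm .
      show "maxC \<subseteq> Ep"
      proof
        fix M assume M: "M \<in> maxC"
        then have "M \<in> CC" unfolding maxC_def by blast
        then obtain E where E: "E \<in> Ep" "M \<subseteq> E" using cov by blast
        then have "E \<in> CC" using Epm unfolding maxC_def by blast
        then have "E = M" using M E unfolding maxC_def by blast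
        then show "M \<in> Ep" using E by blast
      qed
    qed
    then show ?thesis using False CCne pref_char by simp
  qed
  have "meas t < meas s" using after_none ok_card[OF okc] by (simp add: KK_def)
  then show ?thesis using res after_none by simp
qed

lemma progress: "(\<nexists>t. pref_step A \<phi> k s t) \<Longrightarrow> \<exists>E. s = Done E"
proof (cases s)
  case (Outer cnf Ep)
  assume H: "\<nexists>t. pref_step A \<phi> k s t"
  have "pref_step A \<phi> k s (Inner cnf Ep cnf None)" unfolding Outer by (rule pref_step.outer)
  then show ?thesis using H by blast
next
  case (Inner cnf Ep cnfdf pc)
  assume H: "\<nexists>t. pref_step A \<phi> k s t"
  obtain r where r: "SS_output cnfdf r" using SS_ex by blast
  show ?thesis
  proof (cases r)
    case None
    then have "pref_step A \<phi> k s (After cnf Ep pc)" unfolding Inner using r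
      by (intro pref_step.call_eps) simp
    then show ?thesis using H by blast
  next
    case (Some \<nu>)
    show ?thesis
    proof (cases "INARGS \<phi> k \<nu> = A")
      case True
      then have "pref_step A \<phi> k s (After cnf Ep (Some \<nu>))" unfolding Inner using r Some
        by (intro pref_step.call_all) simp_all
      then show ?thesis using H by blast
    next
      case False
      then have "pref_step A \<phi> k s (Inner cnf Ep (cnfdf \<union> inner_add A \<phi> k (INARGS \<phi> k \<nu>)) (Some \<nu>))"
        unfolding Inner using r Some by (intro pref_step.call_cont) simp_all
      then show ?thesis using H by blast
    qed
  qed
next
  case (After cnf Ep pc)
  assume H: "\<nexists>t. pref_step A \<phi> k s t"
  show ?thesis
  proof (cases pc)
    case None
    then have "pref_step A \<phi> k s (Done (if Ep = {} then {{}} else Ep))" unfolding After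
      by (simp add: pref_step.after_none)
    then show ?thesis using H by blast
  next
    case (Some p)
    have "pref_step A \<phi> k s (Outer (cnf \<union> outer_add A \<phi> k (INARGS \<phi> k p)) (Ep \<union> {INARGS \<phi> k p}))"
      unfolding After Some by (rule pref_step.after_some)
    then show ?thesis using H by blast
  qed
next
  case (Done E)
  then show ?thesis by blast
qed

lemma main:
  shows "\<not> (\<exists>f. f 0 = Outer \<Pi> {} \<and> (\<forall>n. pref_step A \<phi> k (f n) (f (Suc n))))
     \<and> (\<forall>s. (pref_step A \<phi> k)\<^sup>*\<^sup>* (Outer \<Pi> {}) s \<and> (\<nexists>t. pref_step A \<phi> k s t) \<longrightarrow>
            s = Done {S. preferred A R S})"
proof (intro conjI allI impI notI)
  assume "\<exists>f. f 0 = Outer \<Pi> {} \<and> (\<forall>n. pref_step A \<phi> k (f n) (f (Suc n)))"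
  then obtain f where f0: "f 0 = Outer \<Pi> {}" and fs: "\<And>n. pref_step A \<phi> k (f n) (f (Suc n))" by blast
  have key: "invar (f n) \<and> meas (f n) + n \<le> meas (f 0)" for n
  proof (induction n)
    case 0
    then show ?case using f0 ok_init by simp
  next
    case (Suc n)
    then have i: "invar (f n)" and l: "meas (f n) + n \<le> meas (f 0)" by auto
    have "invar (f (Suc n)) \<and> meas (f (Suc n)) < meas (f n)" using step_inv[OF fs i] .
    then show ?case using l by simp
  qed
  have "meas (f (Suc (meas (f 0)))) + Suc (meas (f 0)) \<le> meas (f 0)" using key by blast
  then show False by simp
next
  fix s assume H: "(pref_step A \<phi> k)\<^sup>*\<^sup>* (Outer \<Pi> {}) s \<and> (\<nexists>t. pref_step A \<phi> k s t)"
  have r: "(pref_step A \<phi> k)\<^sup>*\<^sup>* (Outer \<Pi> {}) s" using H by blast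
  have "invar s" using r
  proof (induction rule: rtranclp_induct)
    case base
    then show ?case using ok_init by simp
  next
    case (step y z)
    then show ?case using step_inv by blast
  qed
  moreover obtain E where "s = Done E" using progress H by blast
  ultimately show "s = Done {S. preferred A R S}" by simp
qed

end


theorem theorem1:
  fixes A :: "'a set" and R :: "('a \<times> 'a) set" and k :: nat
    and \<phi> :: "nat \<Rightarrow> 'a" and \<Pi> :: cnf
  assumes "finite A" and "R \<subseteq> A \<times> A" and "card A = k"
    and "bij_betw \<phi> {1..k} A"
    and "is_cnf_over (VARS k) \<Pi>"
    and "\<forall>\<nu>. sat \<nu> \<Pi> \<longleftrightarrow> encodes_complete_nonempty A R \<phi> k \<nu>"
  shows "\<not> (\<exists>f. f 0 = Outer \<Pi> {} \<and> (\<forall>n. pref_step A \<phi> k (f n) (f (Suc n))))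
     \<and> (\<forall>s. (pref_step A \<phi> k)\<^sup>*\<^sup>* (Outer \<Pi> {}) s \<and> (\<nexists>t. pref_step A \<phi> k s t) \<longrightarrow>
            s = Done {S. preferred A R S})"
proof -
  interpret PS A R k \<phi> \<Pi>
    using assms by unfold_locales auto
  show ?thesis by (rule main)
qed

end
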